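(* For $p>2$, the function $L_\alpha$ is strictly convex on $[z_p,1)$.
   Context: $p=\alpha(\alpha+1)$, $\alpha>0$; $L_\alpha$ is the solution on $(-1,1)$ of $(1-x^2)y''-2xy'+py=0$ bounded near $1$ with $L_\alpha(1)=1$, and $z_p$ is its largest zero in $(-1,1)$. *)

theory Defs
  imports "HOL-Analysis.Analysis"
begin

definition legendre_sol :: "real \<Rightarrow> (real \<Rightarrow> real) \<Rightarrow> bool" where
  "legendre_sol \<alpha> y \<longleftrightarrow>
     (\<forall>x\<in>{-1<..<1}.
        (y has_real_derivative deriv y x) (at x) \<and>
        (deriv y has_real_derivative deriv (deriv y) x) (at x) \<and>
        (1 - x\<^sup>2) * deriv (deriv y) x - 2 * x * deriv y x + \<alpha> * (\<alpha> + 1) * y x = 0) \<and>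
     (\<exists>\<delta>>0. \<exists>B. \<forall>x\<in>{1-\<delta><..<1}. \<bar>y x\<bar> \<le> B) \<and>
     (y \<longlongrightarrow> 1) (at_left 1) \<and> y 1 = 1"

text \<open>L_alpha, the (unique) such solution, considered on (-1,1].\<close>
definition Leg :: "real \<Rightarrow> real \<Rightarrow> real" where
  "Leg \<alpha> x = (THE v. \<exists>y. legendre_sol \<alpha> y \<and> y x = v)"

definition zp :: "real \<Rightarrow> real" where
  "zp \<alpha> = (GREATEST x. x \<in> {-1<..<1} \<and> Leg \<alpha> x = 0)"

definition strict_convex_on :: "real set \<Rightarrow> (real \<Rightarrow> real) \<Rightarrow> bool" where
  "strict_convex_on S f \<longleftrightarrow>
     (\<forall>x\<in>S. \<forall>y\<in>S. \<forall>t::real. x \<noteq> y \<and> 0 < t \<and> t < 1 \<longrightarrow>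
        f ((1 - t) * x + t * y) < (1 - t) * f x + t * f y)"

end

theory Submission
  imports Defs
begin



fun cf :: "real \<Rightarrow> nat \<Rightarrow> real" where
  "cf p 0 = 1"
| "cf p (Suc n) = cf p n * (real n * (real n + 1) - p) / (real n + 1)^2"

lemma cf_bounded:
  assumes "0 \<le> p" shows "\<exists>M. \<forall>n. \<bar>cf p n\<bar> \<le> M"
proof -
  obtain N :: nat where N: "p \<le> real N" using real_arch_simple by blast
  define M where "M = (\<Sum>k\<le>N. \<bar>cf p k\<bar>)"
  have "\<bar>cf p n\<bar> \<le> M" for n
  proof (induction n)
    case 0
    show ?case unfolding M_def by (rule member_le_sum) auto
  next
    case (Suc n)
    show ?case
    proof (cases "Suc n \<le> N")
      case True
      then show ?thesis unfolding M_def by (intro member_le_sum) auto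
    next
      case False
      hence nN: "real N \<le> real n" by simp
      have h1: "0 \<le> real n * (real n + 1) - p"
      proof -
        have "real n \<le> real n * (real n + 1)" by (simp add: algebra_simps)
        thus ?thesis using N nN by linarith
      qed
      have h2: "real n * (real n + 1) - p \<le> (real n + 1)^2"
        using assms by (simp add: power2_eq_square algebra_simps)
      have "\<bar>cf p (Suc n)\<bar> = \<bar>cf p n\<bar> * ((real n * (real n + 1) - p) / (real n + 1)^2)"
        using h1 by (simp add: abs_mult cf.simps(2))
      also have "\<dots> \<le> \<bar>cf p n\<bar> * 1"
        using h1 h2 by (intro mult_left_mono) (auto simp: divide_le_eq_1)
      finally show ?thesis using Suc.IH by simp
    qed
  qed
  thus ?thesis by blast
qed

declare cf.simps(2)[simp del]

lemma cf_summable: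
  assumes "0 \<le> p" "\<bar>t\<bar> < 1" shows "summable (\<lambda>n. cf p n * t^n)"
proof -
  obtain M where M: "\<And>n. \<bar>cf p n\<bar> \<le> M" using cf_bounded[OF assms(1)] by blast
  show ?thesis
  proof (rule summable_comparison_test)
    show "\<exists>N. \<forall>n\<ge>N. norm (cf p n * t^n) \<le> M * \<bar>t\<bar>^n"
      using M by (auto simp: abs_mult power_abs intro!: mult_right_mono)
    show "summable (\<lambda>n. M * \<bar>t\<bar>^n)" using assms
      by (intro summable_mult summable_geometric) auto
  qed
qed

lemma cf_summable1:
  assumes "0 \<le> p" "\<bar>t\<bar> < 1" shows "summable (\<lambda>n. diffs (cf p) n * t^n)"
  by (rule termdiff_converges[where K=1]) (use assms cf_summable in auto)

lemma cf_summable2: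
  assumes "0 \<le> p" "\<bar>t\<bar> < 1" shows "summable (\<lambda>n. diffs (diffs (cf p)) n * t^n)"
  by (rule termdiff_converges[where K=1]) (use assms cf_summable1 in auto)

definition "w p t = (\<Sum>n. cf p n * t^n)"
definition "w1 p t = (\<Sum>n. diffs (cf p) n * t^n)"
definition "w2 p t = (\<Sum>n. diffs (diffs (cf p)) n * t^n)"

lemma w_deriv:
  assumes "0 \<le> p" "\<bar>t\<bar> < 1" shows "(w p has_real_derivative w1 p t) (at t)"
  unfolding w_def w1_def
  by (rule termdiffs_strong'[where K=1]) (use assms cf_summable in auto)

lemma w1_deriv:
  assumes "0 \<le> p" "\<bar>t\<bar> < 1" shows "(w1 p has_real_derivative w2 p t) (at t)"
  unfolding w2_def w1_def
  by (rule termdiffs_strong'[where K=1]) (use assms cf_summable1 in auto)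

lemma w_ode:
  assumes "0 \<le> p" "\<bar>t\<bar> < 1"
  shows "t * (1 - t) * w2 p t + (1 - 2*t) * w1 p t + p * w p t = 0"
proof -
  have A: "(\<lambda>n. cf p n * t^n) sums w p t" unfolding w_def using cf_summable[OF assms] by (rule summable_sums)
  have B: "(\<lambda>n. (real n + 1) * cf p (Suc n) * t^n) sums w1 p t"
    unfolding w1_def using summable_sums[OF cf_summable1[OF assms]] by (simp add: diffs_def add.commute)
  have D: "(\<lambda>n. (real n + 1) * (real n + 2) * cf p (Suc (Suc n)) * t^n) sums w2 p t"
    unfolding w2_def using summable_sums[OF cf_summable2[OF assms]]
    by (simp add: diffs_def algebra_simps)
  have B': "(\<lambda>n. real n * cf p n * t^n) sums (t * w1 p t)"
  proof -
    have "(\<lambda>n. t * ((real n + 1) * cf p (Suc n) * t^n)) sums (t * w1 p t)"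
      using sums_mult[OF B] by simp
    hence "(\<lambda>n. real (Suc n) * cf p (Suc n) * t^(Suc n)) sums (t * w1 p t)"
      by (simp add: algebra_simps)
    thus ?thesis by (subst (asm) sums_Suc_iff) simp
  qed
  have D': "(\<lambda>n. real n * (real n + 1) * cf p (Suc n) * t^n) sums (t * w2 p t)"
  proof -
    have "(\<lambda>n. t * ((real n + 1) * (real n + 2) * cf p (Suc (Suc n)) * t^n)) sums (t * w2 p t)"
      using sums_mult[OF D] by simp
    hence "(\<lambda>n. real (Suc n) * (real (Suc n) + 1) * cf p (Suc (Suc n)) * t^(Suc n)) sums (t * w2 p t)"
      by (simp add: algebra_simps)
    thus ?thesis by (subst (asm) sums_Suc_iff) simp
  qed
  have D'': "(\<lambda>n. (real n - 1) * real n * cf p n * t^n) sums (t * (t * w2 p t))"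
  proof -
    have "(\<lambda>n. t * (real n * (real n + 1) * cf p (Suc n) * t^n)) sums (t * (t * w2 p t))"
      using sums_mult[OF D'] by simp
    hence "(\<lambda>n. (real (Suc n) - 1) * real (Suc n) * cf p (Suc n) * t^(Suc n)) sums (t * (t * w2 p t))"
      by (simp add: algebra_simps)
    thus ?thesis by (subst (asm) sums_Suc_iff) simp
  qed
  have S: "(\<lambda>n. (real n * (real n + 1) * cf p (Suc n) * t^n - (real n - 1) * real n * cf p n * t^n)
       + ((real n + 1) * cf p (Suc n) * t^n - 2 * (real n * cf p n * t^n)) + p * (cf p n * t^n))
      sums ((t * w2 p t - t * (t * w2 p t)) + (w1 p t - 2 * (t * w1 p t)) + p * w p t)"
    by (intro sums_add sums_diff sums_mult D' D'' B B' A)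
  have Z: "(real n * (real n + 1) * cf p (Suc n) * t^n - (real n - 1) * real n * cf p n * t^n)
       + ((real n + 1) * cf p (Suc n) * t^n - 2 * (real n * cf p n * t^n)) + p * (cf p n * t^n) = 0" for n
  proof -
    have "(real n + 1)^2 * cf p (Suc n) = cf p n * (real n * (real n + 1) - p)"
      by (simp add: cf.simps(2))
    moreover have "(real n * (real n + 1) * cf p (Suc n) * t^n - (real n - 1) * real n * cf p n * t^n)
       + ((real n + 1) * cf p (Suc n) * t^n - 2 * (real n * cf p n * t^n)) + p * (cf p n * t^n)
       = t^n * ((real n + 1)^2 * cf p (Suc n) - cf p n * (real n * (real n + 1) - p))"
      by (simp add: algebra_simps power2_eq_square)
    ultimately show ?thesis by simp
  qed
  from S have "(\<lambda>n. 0::real) sums ((t * w2 p t - t * (t * w2 p t)) + (w1 p t - 2 * (t * w1 p t)) + p * w p t)"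
    by (simp only: Z)
  hence "(t * w2 p t - t * (t * w2 p t)) + (w1 p t - 2 * (t * w1 p t)) + p * w p t = 0"
    using sums_0 sums_unique2 by blast
  thus ?thesis by (simp add: algebra_simps)
qed




lemma blowup:
  fixes h h' :: "real \<Rightarrow> real"
  assumes a: "a < 1"
    and d: "\<And>x. a < x \<Longrightarrow> x < 1 \<Longrightarrow> (h has_real_derivative h' x) (at x)"
    and lb: "\<And>x. a < x \<Longrightarrow> x < 1 \<Longrightarrow> k / (1 - x) \<le> h' x"
    and k: "0 < k"
    and ub: "\<And>x. a < x \<Longrightarrow> x < 1 \<Longrightarrow> h x \<le> M"
  shows False
proof -
  define x0 where "x0 = (a + 1) / 2"
  have x0: "a < x0" "x0 < 1" using a by (auto simp: x0_def)
  define E where "E = min (ln (1 - x0) - 1) ((h x0 + k * ln (1 - x0) - M) / k - 1)"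
  define x where "x = 1 - exp E"
  have "exp E \<le> exp (ln (1 - x0) - 1)" unfolding E_def by simp
  also have "\<dots> < exp (ln (1 - x0))" by simp
  also have "\<dots> = 1 - x0" using x0 by simp
  finally have eE: "exp E < 1 - x0" .
  have xx: "x0 < x" "x < 1" using eE by (auto simp: x_def)
  have lnx: "ln (1 - x) = E" by (simp add: x_def)
  have "h x0 + k * ln (1 - x0) \<le> h x + k * ln (1 - x)"
  proof (rule DERIV_nonneg_imp_increasing_open[where f = "\<lambda>u. h u + k * ln (1 - u)"])
    show "x0 \<le> x" using xx by simp
    fix u assume u: "x0 < u" "u < x"
    hence u': "a < u" "u < 1" using x0 xx by auto
    have "((\<lambda>u. h u + k * ln (1 - u)) has_real_derivative h' u + k * (-1 / (1 - u))) (at u)"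
      using u' by (auto intro!: derivative_eq_intros d simp: field_simps)
    moreover have "0 \<le> h' u + k * (-1 / (1 - u))" using lb[OF u'] by simp
    ultimately show "\<exists>y. ((\<lambda>u. h u + k * ln (1 - u)) has_real_derivative y) (at u) \<and> 0 \<le> y" by blast
  next
    show "continuous_on {x0..x} (\<lambda>u. h u + k * ln (1 - u))"
    proof (intro continuous_at_imp_continuous_on ballI)
      fix u assume "u \<in> {x0..x}"
      hence u': "a < u" "u < 1" using x0 xx by auto
      have "((\<lambda>u. h u + k * ln (1 - u)) has_real_derivative h' u + k * (-1 / (1 - u))) (at u)"
        using u' by (auto intro!: derivative_eq_intros d simp: field_simps)
      thus "isCont (\<lambda>u. h u + k * ln (1 - u)) u" by (rule DERIV_isCont)
    qed
  qed
  also have "\<dots> \<le> M + k * E" using ub[of x] xx x0 lnx by simp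
  finally have "h x0 + k * ln (1 - x0) \<le> M + k * E" .
  moreover have "k * E \<le> k * ((h x0 + k * ln (1 - x0) - M) / k - 1)"
    using k unfolding E_def by (intro mult_left_mono) auto
  moreover have "k * ((h x0 + k * ln (1 - x0) - M) / k - 1) = h x0 + k * ln (1 - x0) - M - k"
    using k by (simp add: field_simps)
  ultimately show False using k by linarith
qed

definition "Lc p x = w p ((1 - x) / 2)"
definition "Lc1 p x = - (w1 p ((1 - x) / 2)) / 2"
definition "Lc2 p x = w2 p ((1 - x) / 2) / 4"

lemma L_exists:
  assumes p: "0 \<le> p"
  shows "\<exists>L L1 L2. (\<forall>x\<in>{-1<..<3}. (L has_real_derivative L1 x) (at x) \<and> (L1 has_real_derivative L2 x) (at x))
     \<and> (\<forall>x\<in>{-1<..<1}. (1 - x\<^sup>2) * L2 x - 2 * x * L1 x + p * L x = 0) \<and> L 1 = 1"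
proof (intro exI conjI ballI)
  fix x :: real assume x: "x \<in> {-1<..<3}"
  hence t: "\<bar>(1 - x) / 2\<bar> < 1" by auto
  show "(Lc p has_real_derivative Lc1 p x) (at x)"
  proof -
    have "((\<lambda>x. w p ((1 - x) / 2)) has_real_derivative w1 p ((1-x)/2) * (-1/2)) (at x)"
      by (rule DERIV_chain'[of "\<lambda>x. (1 - x) / 2" "-1/2" x UNIV "w p" "w1 p ((1-x)/2)", OF _ w_deriv[OF p t]])
        (auto intro!: derivative_eq_intros)
    thus ?thesis unfolding Lc_def[abs_def] Lc1_def by simp
  qed
  show "(Lc1 p has_real_derivative Lc2 p x) (at x)"
  proof -
    have "((\<lambda>x. w1 p ((1 - x) / 2)) has_real_derivative w2 p ((1-x)/2) * (-1/2)) (at x)"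
      by (rule DERIV_chain'[of "\<lambda>x. (1 - x) / 2" "-1/2" x UNIV "w1 p" "w2 p ((1-x)/2)", OF _ w1_deriv[OF p t]])
        (auto intro!: derivative_eq_intros)
    hence "((\<lambda>x. - w1 p ((1 - x) / 2) / 2) has_real_derivative - (w2 p ((1-x)/2) * (-1/2)) / 2) (at x)"
      by (auto intro!: derivative_eq_intros)
    thus ?thesis unfolding Lc1_def[abs_def] Lc2_def by simp
  qed
next
  fix x :: real assume x: "x \<in> {-1<..<1}"
  hence t: "\<bar>(1 - x) / 2\<bar> < 1" by auto
  have o: "(1 - x) / 2 * (1 - (1 - x) / 2) * w2 p ((1 - x) / 2) + (1 - 2 * ((1 - x) / 2)) * w1 p ((1 - x) / 2) + p * w p ((1 - x) / 2) = 0"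
    by (rule w_ode[OF p t])
  have "(1 - x\<^sup>2) * Lc2 p x - 2 * x * Lc1 p x + p * Lc p x =
     (1 - x) / 2 * (1 - (1 - x) / 2) * w2 p ((1 - x) / 2) + (1 - 2 * ((1 - x) / 2)) * w1 p ((1 - x) / 2) + p * w p ((1 - x) / 2)"
    by (simp add: Lc_def Lc1_def Lc2_def power2_eq_square field_simps)
  with o show "(1 - x\<^sup>2) * Lc2 p x - 2 * x * Lc1 p x + p * Lc p x = 0" by simp
next
  show "Lc p 1 = 1" by (simp add: Lc_def w_def)
qed




locale LL =
  fixes \<alpha> p :: real and L L1 L2 :: "real \<Rightarrow> real"
  assumes p_def: "\<alpha> * (\<alpha> + 1) = p"
    and p: "0 < p"
    and dL: "\<And>x. x \<in> {-1<..<3} \<Longrightarrow> (L has_real_derivative L1 x) (at x)"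
    and dL1: "\<And>x. x \<in> {-1<..<3} \<Longrightarrow> (L1 has_real_derivative L2 x) (at x)"
    and ode: "\<And>x. x \<in> {-1<..<1} \<Longrightarrow> (1 - x\<^sup>2) * L2 x - 2 * x * L1 x + p * L x = 0"
    and L_1: "L 1 = 1"
begin

lemma contL: "x \<in> {-1<..<3} \<Longrightarrow> isCont L x"
  using dL DERIV_isCont by blast

lemma contL1: "x \<in> {-1<..<3} \<Longrightarrow> isCont L1 x"
  using dL1 DERIV_isCont by blast

lemma contonL: "S \<subseteq> {-1<..<3} \<Longrightarrow> continuous_on S L"
  using contL by (intro continuous_at_imp_continuous_on) auto

lemma near1: "\<exists>d>0. \<forall>x. dist x 1 < d \<longrightarrow> 1/2 < L x \<and> L x < 2"
proof -
  have "(L \<longlongrightarrow> 1) (at 1)" using contL[of 1] L_1 by (simp add: isCont_def)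
  hence "eventually (\<lambda>x. 1/2 < L x \<and> L x < 2) (at 1)"
    by (intro eventually_conj order_tendstoD) auto
  then obtain d where d: "d > 0" "\<And>x. x \<noteq> 1 \<Longrightarrow> dist x 1 < d \<Longrightarrow> 1/2 < L x \<and> L x < 2"
    unfolding eventually_at by auto
  have "\<forall>x. dist x 1 < d \<longrightarrow> 1/2 < L x \<and> L x < 2"
  proof (intro allI impI)
    fix x :: real assume "dist x 1 < d"
    thus "1/2 < L x \<and> L x < 2" using d(2)[of x] L_1 by (cases "x = 1") auto
  qed
  thus ?thesis using d(1) by blast
qed

lemma deriv_L: "x \<in> {-1<..<3} \<Longrightarrow> deriv L x = L1 x"
  using dL DERIV_imp_deriv by blast

lemma deriv_L1: "x \<in> {-1<..<3} \<Longrightarrow> (deriv L has_real_derivative L2 x) (at x)"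
  by (rule has_field_derivative_transform_within_open[OF dL1, of x "{-1<..<3}"])
     (auto simp: deriv_L)

lemma sol: "legendre_sol \<alpha> L"
  unfolding legendre_sol_def
proof (intro conjI ballI)
  fix x :: real assume x: "x \<in> {-1<..<1}"
  hence x3: "x \<in> {-1<..<3}" by auto
  show "(L has_real_derivative deriv L x) (at x)" using dL[OF x3] deriv_L[OF x3] by simp
  show "(deriv L has_real_derivative deriv (deriv L) x) (at x)"
    using deriv_L1[OF x3] DERIV_imp_deriv by metis
  have "deriv (deriv L) x = L2 x" using deriv_L1[OF x3] DERIV_imp_deriv by metis
  thus "(1 - x\<^sup>2) * deriv (deriv L) x - 2 * x * deriv L x + \<alpha> * (\<alpha> + 1) * L x = 0"
    using ode[OF x] deriv_L[OF x3] p_def by simp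
next
  obtain d where d: "d > 0" "\<And>x. dist x 1 < d \<Longrightarrow> 1/2 < L x \<and> L x < 2" using near1 by blast
  show "\<exists>\<delta>>0. \<exists>B. \<forall>x\<in>{1 - \<delta><..<1}. \<bar>L x\<bar> \<le> B"
  proof -
    have "\<forall>x\<in>{1 - d<..<1}. \<bar>L x\<bar> \<le> 2"
    proof
      fix x :: real assume "x \<in> {1 - d<..<1}"
      hence "dist x 1 < d" by (auto simp: dist_real_def)
      thus "\<bar>L x\<bar> \<le> 2" using d(2)[of x] by auto
    qed
    thus ?thesis using d(1) by blast
  qed
next
  have "(L \<longlongrightarrow> 1) (at 1)" using contL[of 1] L_1 by (simp add: isCont_def)
  thus "(L \<longlongrightarrow> 1) (at_left 1)" by (rule filterlim_mono) (auto simp: at_le)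
next
  show "L 1 = 1" by (rule L_1)
qed

lemma uniq_near1:
  assumes ys: "legendre_sol \<alpha> y"
  shows "\<exists>a. 0 \<le> a \<and> a < 1 \<and> (\<forall>x. a < x \<and> x < 1 \<longrightarrow> y x = L x)"
proof -
  define y1 where "y1 = deriv y"
  define y2 where "y2 = deriv (deriv y)"
  have dy: "\<And>x. x\<in>{-1<..<1} \<Longrightarrow> (y has_real_derivative y1 x) (at x)"
    and dy1: "\<And>x. x\<in>{-1<..<1} \<Longrightarrow> (y1 has_real_derivative y2 x) (at x)"
    and yode: "\<And>x. x\<in>{-1<..<1} \<Longrightarrow> (1 - x\<^sup>2) * y2 x - 2 * x * y1 x + p * y x = 0"
    and ybd: "\<exists>\<delta>>0. \<exists>B. \<forall>x\<in>{1-\<delta><..<1}. \<bar>y x\<bar> \<le> B"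
    and ylim: "(y \<longlongrightarrow> 1) (at_left 1)"
    using ys unfolding legendre_sol_def y1_def y2_def p_def by auto
  define W where "W = (\<lambda>x. (1 - x\<^sup>2) * (L x * y1 x - L1 x * y x))"
  have dW: "(W has_real_derivative 0) (at x)" if x: "x \<in> {-1<..<1}" for x
  proof -
    have x3: "x \<in> {-1<..<3}" using x by auto
    have D: "(W has_real_derivative (-(2*x)) * (L x * y1 x - L1 x * y x)
        + (1 - x\<^sup>2) * ((L1 x * y1 x + L x * y2 x) - (L2 x * y x + L1 x * y1 x))) (at x)"
      unfolding W_def
      by (auto intro!: derivative_eq_intros dL[OF x3] dL1[OF x3] dy[OF x] dy1[OF x]
          simp: algebra_simps power2_eq_square)
    have e1: "(1 - x\<^sup>2) * y2 x = 2 * x * y1 x - p * y x" using yode[OF x] by simp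
    have e2: "(1 - x\<^sup>2) * L2 x = 2 * x * L1 x - p * L x" using ode[OF x] by simp
    have "(-(2*x)) * (L x * y1 x - L1 x * y x)
        + (1 - x\<^sup>2) * ((L1 x * y1 x + L x * y2 x) - (L2 x * y x + L1 x * y1 x))
      = (-(2*x)) * (L x * y1 x - L1 x * y x) + L x * ((1 - x\<^sup>2) * y2 x) - y x * ((1 - x\<^sup>2) * L2 x)"
      by (simp add: algebra_simps)
    also have "\<dots> = 0" unfolding e1 e2 by (simp add: algebra_simps)
    finally show ?thesis using D by simp
  qed
  obtain c where c: "\<And>x. x \<in> {-1<..<1} \<Longrightarrow> W x = c"
    using has_field_derivative_zero_constant[of "{-1<..<1}" W] dW
    by (metis convex_real_interval(8) has_field_derivative_at_within)
  obtain \<delta>1 B where \<delta>1: "\<delta>1 > 0" "\<And>x. x\<in>{1-\<delta>1<..<1} \<Longrightarrow> \<bar>y x\<bar> \<le> B" using ybd by meson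
  obtain \<delta>2 where \<delta>2: "\<delta>2 > 0" "\<And>x. dist x 1 < \<delta>2 \<Longrightarrow> 1/2 < L x \<and> L x < 2" using near1 by auto
  define a where "a = max 0 (1 - min \<delta>1 \<delta>2)"
  have a: "0 \<le> a" "a < 1" using \<delta>1 \<delta>2 by (auto simp: a_def)
  have inI: "\<bar>y x\<bar> \<le> B \<and> 1/2 < L x \<and> L x < 2 \<and> x \<in> {-1<..<1}" if "a < x" "x < 1" for x
  proof -
    have "x \<in> {1-\<delta>1<..<1}" "dist x 1 < \<delta>2" using that by (auto simp: a_def dist_real_def)
    thus ?thesis using \<delta>1(2) \<delta>2(2) that a by auto
  qed
  define h where "h = (\<lambda>x. y x / L x)"
  define h' where "h' = (\<lambda>x. (y1 x * L x - y x * L1 x) / (L x * L x))"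
  have dh: "(h has_real_derivative h' x) (at x)" if "a < x" "x < 1" for x
  proof -
    have x: "x \<in> {-1<..<1}" and x3: "x \<in> {-1<..<3}" and Lx: "L x \<noteq> 0" using inI[OF that] by auto
    show ?thesis unfolding h_def h'_def
      using DERIV_divide[OF dy[OF x] dL[OF x3] Lx] by simp
  qed
  have h'c: "h' x = c / ((1 - x\<^sup>2) * (L x * L x))" if "a < x" "x < 1" for x
  proof -
    have x: "x \<in> {-1<..<1}" and Lx: "L x \<noteq> 0" using inI[OF that] by auto
    have pos: "1 - x\<^sup>2 > 0" using x by (auto simp: abs_square_less_1)
    have "(1 - x\<^sup>2) * (L x * y1 x - L1 x * y x) = c" using c[OF x] by (simp add: W_def)
    hence e: "L x * y1 x - L1 x * y x = c / (1 - x\<^sup>2)" using pos by (simp add: eq_divide_eq mult.commute)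
    have "h' x = (L x * y1 x - L1 x * y x) / (L x * L x)" unfolding h'_def by (simp add: mult.commute)
    also have "\<dots> = c / ((1 - x\<^sup>2) * (L x * L x))" unfolding e by simp
    finally show ?thesis .
  qed
  have hb: "\<bar>h x\<bar> \<le> 2 * B" if "a < x" "x < 1" for x
  proof -
    have yb: "\<bar>y x\<bar> \<le> B" and Lx: "1/2 < L x" using inI[OF that] by auto
    have "\<bar>h x\<bar> = \<bar>y x\<bar> / L x" using Lx by (simp add: h_def abs_divide)
    also have "\<dots> \<le> 2 * B"
    proof -
      have B0: "0 \<le> B" using yb by linarith
      have "B * 1 \<le> B * (2 * L x)" using B0 Lx by (intro mult_left_mono) auto
      hence "\<bar>y x\<bar> \<le> 2 * B * L x" using yb by (simp add: algebra_simps)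
      thus ?thesis using Lx by (simp add: divide_le_eq)
    qed
    finally show ?thesis .
  qed
  have c0: "c = 0"
  proof (rule ccontr)
    assume "c \<noteq> 0"
    have "\<exists>\<sigma>::real. \<sigma> * c > 0 \<and> \<bar>\<sigma>\<bar> = 1"
    proof (cases "c > 0")
      case True thus ?thesis by (intro exI[of _ 1]) auto
    next
      case False thus ?thesis using \<open>c \<noteq> 0\<close> by (intro exI[of _ "-1"]) auto
    qed
    then obtain \<sigma> :: real where \<sigma>: "\<sigma> * c > 0" "\<bar>\<sigma>\<bar> = 1" by blast
    show False
    proof (rule blowup[where h="\<lambda>x. \<sigma> * h x" and h'="\<lambda>x. \<sigma> * h' x" and a=a and k="\<sigma> * c / 8" and M="2 * B"])
      show "a < 1" by (rule a)
      show "0 < \<sigma> * c / 8" using \<sigma> by simp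
      fix x assume x: "a < x" "x < 1"
      show "((\<lambda>x. \<sigma> * h x) has_real_derivative \<sigma> * h' x) (at x)"
        using dh[OF x] by (rule DERIV_cmult)
      have "\<sigma> * h x \<le> \<bar>\<sigma> * h x\<bar>" by (rule abs_ge_self)
      also have "\<dots> = \<bar>h x\<bar>" by (simp add: abs_mult \<sigma>(2))
      finally show "\<sigma> * h x \<le> 2 * B" using hb[OF x] by linarith
      have xi: "x \<in> {-1<..<1}" and L: "1/2 < L x" "L x < 2" using inI[OF x] by auto
      have q1: "0 < 1 - x\<^sup>2" using xi by (auto simp: abs_square_less_1)
      have "0 \<le> (x - 1)\<^sup>2" by simp
      hence q2: "1 - x\<^sup>2 \<le> 2 * (1 - x)" by (simp add: power2_eq_square algebra_simps)
      have "L x * L x \<le> 2 * 2" using L by (intro mult_mono) auto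
      hence q3: "L x * L x \<le> 4" by simp
      have q4: "0 < L x * L x" using L by simp
      have "(1 - x\<^sup>2) * (L x * L x) \<le> (2 * (1 - x)) * 4"
        using q1 q2 q3 q4 by (intro mult_mono) auto
      hence "\<sigma> * c / (2 * (1 - x) * 4) \<le> \<sigma> * c / ((1 - x\<^sup>2) * (L x * L x))"
        using q1 q4 \<sigma>(1) xi by (intro divide_left_mono) (auto intro!: mult_pos_pos)
      thus "\<sigma> * c / 8 / (1 - x) \<le> \<sigma> * h' x" using h'c[OF x] by (simp add: field_simps)
    qed
  qed
  obtain k where k: "\<And>x. x \<in> {a<..<1} \<Longrightarrow> h x = k"
  proof -
    have "\<exists>k. \<forall>x\<in>{a<..<1}. h x = k"
    proof (rule has_field_derivative_zero_constant)
      show "convex {a<..<1}" by simp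
      fix x assume "x \<in> {a<..<1}"
      hence "a < x" "x < 1" by auto
      hence "(h has_real_derivative 0) (at x)" using dh h'c c0 by fastforce
      thus "(h has_field_derivative 0) (at x within {a<..<1})" by (rule has_field_derivative_at_within)
    qed
    thus ?thesis using that by blast
  qed
  have Llim: "(L \<longlongrightarrow> 1) (at_left 1)"
  proof -
    have "(L \<longlongrightarrow> 1) (at 1)" using contL[of 1] L_1 by (simp add: isCont_def)
    thus ?thesis by (rule filterlim_mono) (auto simp: at_le)
  qed
  have hl1: "(h \<longlongrightarrow> 1) (at_left 1)" unfolding h_def using tendsto_divide[OF ylim Llim] by simp
  have "eventually (\<lambda>x. h x = k) (at_left 1)"
    using eventually_at_left_real[OF a(2)] by eventually_elim (use k in auto)
  hence hlk: "(h \<longlongrightarrow> k) (at_left 1)" by (rule tendsto_eventually)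
  have k1: "k = 1" using tendsto_unique[OF _ hlk hl1] by simp
  show ?thesis
  proof (intro exI conjI allI impI)
    fix x assume x: "a < x \<and> x < 1"
    hence "h x = 1" using k k1 by auto
    moreover have "L x \<noteq> 0" using inI x by force
    ultimately show "y x = L x" by (simp add: h_def)
  qed (use a in auto)
qed

lemma uniq:
  assumes ys: "legendre_sol \<alpha> y" and x: "x \<in> {-1<..1}"
  shows "y x = L x"
proof -
  obtain a where a: "0 \<le> a" "a < 1" and ya: "\<And>x. a < x \<Longrightarrow> x < 1 \<Longrightarrow> y x = L x"
    using uniq_near1[OF ys] by blast
  define y1 where "y1 = deriv y"
  define y2 where "y2 = deriv (deriv y)"
  have dy: "\<And>x. x\<in>{-1<..<1} \<Longrightarrow> (y has_real_derivative y1 x) (at x)"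
    and dy1: "\<And>x. x\<in>{-1<..<1} \<Longrightarrow> (y1 has_real_derivative y2 x) (at x)"
    and yode: "\<And>x. x\<in>{-1<..<1} \<Longrightarrow> (1 - x\<^sup>2) * y2 x - 2 * x * y1 x + p * y x = 0"
    and y_1: "y 1 = 1"
    using ys unfolding legendre_sol_def y1_def y2_def p_def by auto
  have "x \<le> 1" using x by simp
  then consider "x = 1" | "a < x \<and> x < 1" | "x \<le> a" by linarith
  then show ?thesis
  proof cases
    case 1 thus ?thesis using y_1 L_1 by simp
  next
    case 2 thus ?thesis using ya by auto
  next
    case 3
    have xm: "-1 < x" using x by auto
    define c0 where "c0 = (a + 1) / 2"
    have c0: "a < c0" "c0 < 1" "0 < c0" using a by (auto simp: c0_def)
    define d where "d = (\<lambda>t. y t - L t)"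
    define d1 where "d1 = (\<lambda>t. y1 t - L1 t)"
    define d2 where "d2 = (\<lambda>t. y2 t - L2 t)"
    have dc0: "d c0 = 0" using ya c0 by (simp add: d_def)
    have d1c0: "d1 c0 = 0"
    proof -
      have c0i: "c0 \<in> {-1<..<1}" "c0 \<in> {-1<..<3}" using c0 by auto
      have "(y has_real_derivative L1 c0) (at c0)"
        by (rule has_field_derivative_transform_within_open[OF dL[OF c0i(2)], of "{a<..<1}"])
           (use c0 ya in auto)
      hence "y1 c0 = L1 c0" using dy[OF c0i(1)] DERIV_unique by blast
      thus ?thesis by (simp add: d1_def)
    qed
    define F where "F = (\<lambda>t. p * (d t * d t) + (1 - t * t) * (d1 t * d1 t))"
    have dF: "(F has_real_derivative 2 * t * (d1 t * d1 t)) (at t)" if t: "t \<in> {-1<..<1}" for t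
    proof -
      have t3: "t \<in> {-1<..<3}" using t by auto
      have dd: "(d has_real_derivative d1 t) (at t)" unfolding d_def d1_def
        using DERIV_diff[OF dy[OF t] dL[OF t3]] by simp
      have dd1: "(d1 has_real_derivative d2 t) (at t)" unfolding d1_def d2_def
        using DERIV_diff[OF dy1[OF t] dL1[OF t3]] by simp
      have D: "(F has_real_derivative p * (d1 t * d t + d t * d1 t) + ((-(t + t)) * (d1 t * d1 t)
          + (1 - t * t) * (d2 t * d1 t + d1 t * d2 t))) (at t)"
        unfolding F_def by (auto intro!: derivative_eq_intros dd dd1 simp: algebra_simps)
      have e: "(1 - t * t) * d2 t = 2 * t * d1 t - p * d t"
        using yode[OF t] ode[OF t] by (simp add: d_def d1_def d2_def power2_eq_square algebra_simps)
      have "p * (d1 t * d t + d t * d1 t) + ((-(t + t)) * (d1 t * d1 t)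
          + (1 - t * t) * (d2 t * d1 t + d1 t * d2 t))
        = 2 * p * d t * d1 t - 2 * t * (d1 t * d1 t) + 2 * d1 t * ((1 - t * t) * d2 t)"
        by (simp add: algebra_simps)
      also have "\<dots> = 2 * t * (d1 t * d1 t)" unfolding e by (simp add: algebra_simps)
      finally have eqE: "p * (d1 t * d t + d t * d1 t) + ((-(t + t)) * (d1 t * d1 t)
          + (1 - t * t) * (d2 t * d1 t + d1 t * d2 t)) = 2 * t * (d1 t * d1 t)" .
      show ?thesis using D unfolding eqE .
    qed
    define m where "m = min (1 - x * x) (1 - c0 * c0)"
    have m: "0 < m"
    proof -
      have "\<bar>x\<bar> < 1" using xm c0 3 a by auto
      hence "x\<^sup>2 < 1" by (simp add: abs_square_less_1)
      hence "x * x < 1" by (simp add: power2_eq_square)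
      moreover have "\<bar>c0\<bar> < 1" using c0 by auto
      hence "c0\<^sup>2 < 1" by (simp add: abs_square_less_1)
      hence "c0 * c0 < 1" by (simp add: power2_eq_square)
      ultimately show ?thesis by (simp add: m_def)
    qed
    define K where "K = 2 / m"
    define G where "G = (\<lambda>t. exp (K * t) * F t)"
    have dG: "(G has_real_derivative exp (K * t) * (K * F t + 2 * t * (d1 t * d1 t))) (at t)"
      if t: "t \<in> {-1<..<1}" for t
      unfolding G_def by (auto intro!: derivative_eq_intros dF[OF t] simp: algebra_simps)
    have "G x \<le> G c0"
    proof (rule DERIV_nonneg_imp_increasing_open[where f=G])
      show "x \<le> c0" using 3 c0 by simp
      fix t assume t: "x < t" "t < c0"
      hence ti: "t \<in> {-1<..<1}" using xm c0 by auto
      have tt: "t * t \<le> max (x * x) (c0 * c0)"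
      proof (cases "0 \<le> t")
        case True
        hence "t * t \<le> c0 * c0" using t by (intro mult_mono) auto
        thus ?thesis by simp
      next
        case False
        hence "(-t) * (-t) \<le> (-x) * (-x)" using t by (intro mult_mono) auto
        thus ?thesis by simp
      qed
      have mt: "m \<le> 1 - t * t" using tt unfolding m_def by (auto simp: max_def min_def split: if_splits)
      have q: "0 \<le> d1 t * d1 t" by simp
      have "m * (d1 t * d1 t) \<le> (1 - t * t) * (d1 t * d1 t)" using mt q by (rule mult_right_mono)
      also have "\<dots> \<le> F t" unfolding F_def using p by simp
      finally have mF: "m * (d1 t * d1 t) \<le> F t" .
      have "2 * (d1 t * d1 t) \<le> K * F t"
      proof -
        have "K * F t \<ge> K * (m * (d1 t * d1 t))" using mF m by (intro mult_left_mono) (auto simp: K_def)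
        also have "K * (m * (d1 t * d1 t)) = 2 * (d1 t * d1 t)" using m by (simp add: K_def)
        finally show ?thesis by simp
      qed
      moreover have "- (d1 t * d1 t) \<le> t * (d1 t * d1 t)"
      proof -
        have "(-1) * (d1 t * d1 t) \<le> t * (d1 t * d1 t)" using ti q by (intro mult_right_mono) auto
        thus ?thesis by simp
      qed
      ultimately have "0 \<le> K * F t + 2 * t * (d1 t * d1 t)" by linarith
      hence "0 \<le> exp (K * t) * (K * F t + 2 * t * (d1 t * d1 t))" by simp
      thus "\<exists>y. (G has_real_derivative y) (at t) \<and> 0 \<le> y" using dG[OF ti] by blast
    next
      show "continuous_on {x..c0} G"
      proof (intro continuous_at_imp_continuous_on ballI)
        fix t assume "t \<in> {x..c0}"
        hence "t \<in> {-1<..<1}" using xm c0 by auto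
        thus "isCont G t" using dG DERIV_isCont by blast
      qed
    qed
    also have "G c0 = 0" unfolding G_def F_def using dc0 d1c0 by simp
    finally have "exp (K * x) * F x \<le> 0" unfolding G_def .
    hence Fx: "F x \<le> 0" by (simp add: mult_le_0_iff)
    have "0 \<le> (1 - x * x) * (d1 x * d1 x)"
    proof -
      have "x * x < 1" using m by (simp add: m_def)
      thus ?thesis by simp
    qed
    hence "p * (d x * d x) \<le> 0" using Fx unfolding F_def by linarith
    hence "d x * d x \<le> 0" using p by (simp add: mult_le_0_iff)
    hence "d x = 0" by (simp add: mult_le_0_iff) linarith
    thus ?thesis by (simp add: d_def)
  qed
qed

lemma Leg_eq: "x \<in> {-1<..1} \<Longrightarrow> Leg \<alpha> x = L x"
  unfolding Leg_def
proof (rule the_equality)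
  assume "x \<in> {-1<..1}"
  show "\<exists>y. legendre_sol \<alpha> y \<and> y x = L x" using sol by blast
  fix v assume "\<exists>y. legendre_sol \<alpha> y \<and> y x = v"
  then obtain y where "legendre_sol \<alpha> y" "y x = v" by blast
  thus "v = L x" using uniq \<open>x \<in> {-1<..1}\<close> by metis
qed

end



context LL begin

lemma pos_right:
  assumes x: "x \<in> {-1<..<1}" and nz: "\<And>z. x \<le> z \<Longrightarrow> z < 1 \<Longrightarrow> L z \<noteq> 0"
  shows "L x > 0"
proof (rule ccontr)
  assume "\<not> L x > 0"
  hence "L x \<le> 0" by simp
  moreover have "continuous_on {x..1} L" using x by (intro contonL) auto
  ultimately obtain z where z: "x \<le> z" "z \<le> 1" "L z = 0"
    using IVT'[of L x 0 1] L_1 x by auto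
  have "z \<noteq> 1" using z L_1 by auto
  thus False using nz z by auto
qed

definition "Q x = (1 - x\<^sup>2) * L1 x"
definition "Qd x = (-(2 * x)) * L1 x + (1 - x\<^sup>2) * L2 x"

lemma dQ: "x \<in> {-1<..<3} \<Longrightarrow> (Q has_real_derivative Qd x) (at x)"
  unfolding Q_def[abs_def] Qd_def
  by (auto intro!: derivative_eq_intros dL1 simp: algebra_simps)

lemma Qd_eq: "x \<in> {-1<..<1} \<Longrightarrow> Qd x = - p * L x"
  using ode[of x] unfolding Qd_def by (simp add: algebra_simps)

lemma Q_1: "Q 1 = 0" by (simp add: Q_def)

lemma Q_pos:
  assumes x: "x \<in> {-1<..<1}" and Lp: "\<And>z. x < z \<Longrightarrow> z < 1 \<Longrightarrow> L z > 0"
  shows "Q x > 0"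
proof -
  obtain \<xi> where \<xi>: "x < \<xi>" "\<xi> < 1" "Q 1 - Q x = (1 - x) * Qd \<xi>"
    using MVT2[of x 1 Q Qd] dQ x by force
  have "Qd \<xi> < 0" using Qd_eq[of \<xi>] Lp[OF \<xi>(1,2)] p \<xi> x by auto
  moreover have "0 < 1 - x" using x by simp
  ultimately have "(1 - x) * Qd \<xi> < 0" by (simp add: mult_pos_neg)
  thus ?thesis using \<xi> Q_1 by simp
qed

lemma zero_exists: "\<exists>z\<in>{-1<..<1}. L z = 0"
proof (rule ccontr)
  assume "\<not> ?thesis"
  hence Lp: "\<And>x. x \<in> {-1<..<1} \<Longrightarrow> L x > 0" using pos_right by force
  have Q0: "Q 0 > 0" using Q_pos[of 0] Lp by auto
  show False
  proof (rule blowup[where h="\<lambda>u. - L (- u)" and h'="\<lambda>u. L1 (- u)" and a=0 and k="Q 0 / 2" and M=0])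
    show "(0::real) < 1" by simp
    show "0 < Q 0 / 2" using Q0 by simp
    fix u :: real assume u: "0 < u" "u < 1"
    have u3: "- u \<in> {-1<..<3}" and ui: "- u \<in> {-1<..<1}" using u by auto
    have "((\<lambda>u. L (- u)) has_real_derivative L1 (- u) * (-1)) (at u)"
      by (rule DERIV_chain'[of "\<lambda>u. - u" "-1" u UNIV L "L1 (- u)", OF _ dL[OF u3]])
         (auto intro!: derivative_eq_intros)
    from DERIV_minus[OF this]
    show "((\<lambda>u. - L (- u)) has_real_derivative L1 (- u)) (at u)" by simp
    show "- L (- u) \<le> 0" using Lp[OF ui] by simp
    obtain \<xi> where \<xi>: "- u < \<xi>" "\<xi> < 0" "Q 0 - Q (- u) = (0 - - u) * Qd \<xi>"
      using MVT2[of "- u" 0 Q Qd] dQ u by force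
    have "Qd \<xi> < 0" using Qd_eq[of \<xi>] Lp[of \<xi>] p \<xi> u by auto
    hence "u * Qd \<xi> < 0" using u by (simp add: mult_pos_neg)
    hence Qu: "Q 0 < Q (- u)" using \<xi> by simp
    have q1: "0 < 1 - u\<^sup>2" using u by (simp add: power_less_one_iff abs_square_less_1)
    have "0 \<le> (u - 1)\<^sup>2" by simp
    hence q2: "1 - u\<^sup>2 \<le> 2 * (1 - u)" by (simp add: power2_eq_square algebra_simps)
    have "L1 (- u) = Q (- u) / (1 - u\<^sup>2)" using q1 by (simp add: Q_def)
    also have "\<dots> \<ge> Q 0 / (1 - u\<^sup>2)" using Qu q1 by (simp add: divide_right_mono)
    also have "Q 0 / (1 - u\<^sup>2) \<ge> Q 0 / (2 * (1 - u))" using q1 q2 Q0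
      by (intro divide_left_mono) (auto intro!: mult_pos_pos)
    finally show "Q 0 / 2 / (1 - u) \<le> L1 (- u)" by simp
  qed
qed

lemma zp_char:
  "\<exists>s. zp \<alpha> = s \<and> s \<in> {-1<..<1} \<and> L s = 0 \<and> (\<forall>x. s < x \<and> x < 1 \<longrightarrow> L x > 0)"
proof -
  obtain z0 where z0: "z0 \<in> {-1<..<1}" "L z0 = 0" using zero_exists by blast
  define S where "S = {x \<in> {z0..1}. L x = 0}"
  have cl: "closed S" unfolding S_def
    by (intro continuous_closed_preimage_constant contonL) (use z0 in auto)
  have "z0 \<in> S" using z0 by (auto simp: S_def)
  hence ne: "S \<noteq> {}" by blast
  have bd: "bdd_above S" by (auto simp: S_def bdd_above_def)
  define s where "s = Sup S"
  have sS: "s \<in> S" unfolding s_def by (rule closed_contains_Sup[OF ne bd cl])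
  have up: "x \<in> S \<Longrightarrow> x \<le> s" for x unfolding s_def by (rule cSup_upper[OF _ bd])
  have s1: "L s = 0" "z0 \<le> s" "s \<le> 1" using sS by (auto simp: S_def)
  have "s \<noteq> 1" using s1 L_1 by auto
  hence si: "s \<in> {-1<..<1}" using s1 z0 by auto
  have zle: "x \<le> s" if "x \<in> {-1<..<1}" "L x = 0" for x
  proof (cases "z0 \<le> x")
    case True thus ?thesis using that up by (auto simp: S_def)
  next
    case False thus ?thesis using s1 by simp
  qed
  have "zp \<alpha> = s" unfolding zp_def
  proof (rule Greatest_equality)
    show "s \<in> {-1<..<1} \<and> Leg \<alpha> s = 0" using si s1 Leg_eq[of s] by auto
    fix y assume "y \<in> {-1<..<1} \<and> Leg \<alpha> y = 0"
    thus "y \<le> s" using zle Leg_eq[of y] by auto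
  qed
  moreover have "\<forall>x. s < x \<and> x < 1 \<longrightarrow> L x > 0"
  proof (intro allI impI)
    fix x assume x: "s < x \<and> x < 1"
    show "L x > 0"
    proof (rule pos_right)
      show "x \<in> {-1<..<1}" using x si by auto
      fix z assume "x \<le> z" "z < 1"
      thus "L z \<noteq> 0" using zle[of z] x si by force
    qed
  qed
  ultimately show ?thesis using si s1 by blast
qed

definition "R x = (1 - x\<^sup>2) * (2 * x * L1 x - p * L x)"
definition "Rd x = (-(2 * x)) * (2 * x * L1 x - p * L x) + (1 - x\<^sup>2) * (2 * L1 x + 2 * x * L2 x - p * L1 x)"

lemma dR: "x \<in> {-1<..<3} \<Longrightarrow> (R has_real_derivative Rd x) (at x)"
  unfolding R_def[abs_def] Rd_def
  by (auto intro!: derivative_eq_intros dL dL1 simp: algebra_simps)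

lemma Rd_eq: "x \<in> {-1<..<1} \<Longrightarrow> Rd x = (2 - p) * (1 - x\<^sup>2) * L1 x"
proof -
  assume x: "x \<in> {-1<..<1}"
  have e: "(1 - x\<^sup>2) * L2 x = 2 * x * L1 x - p * L x" using ode[OF x] by simp
  have "Rd x = (-(2 * x)) * (2 * x * L1 x - p * L x) + (2 - p) * (1 - x\<^sup>2) * L1 x + 2 * x * ((1 - x\<^sup>2) * L2 x)"
    unfolding Rd_def by (simp add: algebra_simps)
  also have "\<dots> = (2 - p) * (1 - x\<^sup>2) * L1 x" unfolding e by (simp add: algebra_simps)
  finally show ?thesis .
qed

lemma convex_main:
  assumes p2: "p > 2"
  shows "strict_convex_on {zp \<alpha>..<1} (Leg \<alpha>)"
proof -
  obtain s where s: "zp \<alpha> = s" "s \<in> {-1<..<1}" "L s = 0" and Lp: "\<And>x. s < x \<Longrightarrow> x < 1 \<Longrightarrow> L x > 0"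
    using zp_char by blast
  have L1p: "L1 x > 0" if "s < x" "x < 1" for x
  proof -
    have xi: "x \<in> {-1<..<1}" using that s by auto
    have "Q x > 0" using Q_pos[OF xi] Lp that by auto
    moreover have "0 < 1 - x\<^sup>2" using xi by (simp add: abs_square_less_1 abs_less_iff)
    ultimately show ?thesis by (simp add: Q_def zero_less_mult_iff)
  qed
  have L2p: "L2 x > 0" if x: "s < x" "x < 1" for x
  proof -
    have xi: "x \<in> {-1<..<1}" using x s by auto
    have q1: "0 < 1 - x\<^sup>2" using xi by (simp add: abs_square_less_1 abs_less_iff)
    obtain \<xi> where \<xi>: "x < \<xi>" "\<xi> < 1" "R 1 - R x = (1 - x) * Rd \<xi>"
      using MVT2[of x 1 R Rd] dR xi by force
    have \<xi>i: "\<xi> \<in> {-1<..<1}" using \<xi> xi by auto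
    have "0 < 1 - \<xi>\<^sup>2" using \<xi>i by (simp add: abs_square_less_1 abs_less_iff)
    hence "0 < (p - 2) * (1 - \<xi>\<^sup>2) * L1 \<xi>" using p2 L1p[of \<xi>] \<xi> x by simp
    hence "Rd \<xi> < 0" using Rd_eq[OF \<xi>i] by (simp add: algebra_simps)
    moreover have "0 < 1 - x" using xi by simp
    ultimately have "(1 - x) * Rd \<xi> < 0" by (simp add: mult_pos_neg)
    hence "R x > 0" using \<xi> by (simp add: R_def)
    hence "2 * x * L1 x - p * L x > 0" using q1 by (simp add: R_def zero_less_mult_iff)
    hence "(1 - x\<^sup>2) * L2 x > 0" using ode[OF xi] by simp
    thus ?thesis using q1 by (simp add: zero_less_mult_iff)
  qed
  have L1mono: "L1 u < L1 v" if uv: "s \<le> u" "u < v" "v < 1" for u v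
  proof -
    obtain \<xi> where \<xi>: "u < \<xi>" "\<xi> < v" "L1 v - L1 u = (v - u) * L2 \<xi>"
      using MVT2[of u v L1 L2] dL1 uv s by force
    have "0 < (v - u) * L2 \<xi>" using L2p[of \<xi>] \<xi> uv by simp
    thus ?thesis using \<xi> by simp
  qed
  have core: "L ((1 - t) * u + t * v) < (1 - t) * L u + t * L v"
    if uv: "s \<le> u" "u < v" "v < 1" and t: "0 < t" "t < 1" for u v t
  proof -
    define z where "z = (1 - t) * u + t * v"
    have zu: "z - u = t * (v - u)" by (simp add: z_def algebra_simps)
    have vz: "v - z = (1 - t) * (v - u)" by (simp add: z_def algebra_simps)
    have p1: "0 < t * (v - u)" using uv t by (auto intro!: mult_pos_pos)
    have p2: "0 < (1 - t) * (v - u)" using uv t by (auto intro!: mult_pos_pos)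
    have z1: "u < z" using p1 unfolding zu[symmetric] by simp
    have z2: "z < v" using p2 unfolding vz[symmetric] by simp
    note z = z1 z2
    obtain \<xi>1 where \<xi>1: "u < \<xi>1" "\<xi>1 < z" "L z - L u = (z - u) * L1 \<xi>1"
      using MVT2[of u z L L1] dL z uv s by force
    obtain \<xi>2 where \<xi>2: "z < \<xi>2" "\<xi>2 < v" "L v - L z = (v - z) * L1 \<xi>2"
      using MVT2[of z v L L1] dL z uv s by force
    have lt: "L1 \<xi>1 < L1 \<xi>2" using L1mono[of \<xi>1 \<xi>2] \<xi>1 \<xi>2 uv by simp
    have "(1 - t) * L u + t * L v - L z = t * (L v - L z) - (1 - t) * (L z - L u)"
      by (simp add: algebra_simps)
    also have "\<dots> = t * (1 - t) * (v - u) * (L1 \<xi>2 - L1 \<xi>1)"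
      unfolding \<xi>1(3) \<xi>2(3) zu vz by (simp add: algebra_simps)
    also have "\<dots> > 0" using t uv lt by (intro mult_pos_pos) auto
    finally show ?thesis by (simp add: z_def)
  qed
  show ?thesis
    unfolding strict_convex_on_def s(1)
  proof (intro ballI allI impI)
    fix x y t :: real assume x: "x \<in> {s..<1}" and y: "y \<in> {s..<1}" and h: "x \<noteq> y \<and> 0 < t \<and> t < 1"
    have m: "(1 - t) * x + t * y \<in> {s..<1}"
    proof -
      have a1: "(1 - t) * min x y \<le> (1 - t) * x" using h by (intro mult_left_mono) auto
      have a2: "t * min x y \<le> t * y" using h by (intro mult_left_mono) auto
      have a3: "(1 - t) * x \<le> (1 - t) * max x y" using h by (intro mult_left_mono) auto
      have a4: "t * y \<le> t * max x y" using h by (intro mult_left_mono) auto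
      have "(1 - t) * min x y + t * min x y = min x y" "(1 - t) * max x y + t * max x y = max x y"
        by (simp_all add: algebra_simps)
      hence "min x y \<le> (1 - t) * x + t * y" "(1 - t) * x + t * y \<le> max x y"
        using a1 a2 a3 a4 by linarith+
      moreover have "s \<le> min x y" "max x y < 1" using x y by auto
      ultimately show ?thesis by auto
    qed
    have eqs: "Leg \<alpha> x = L x" "Leg \<alpha> y = L y" "Leg \<alpha> ((1 - t) * x + t * y) = L ((1 - t) * x + t * y)"
      using x y m s(2) by (auto intro!: Leg_eq)
    show "Leg \<alpha> ((1 - t) * x + t * y) < (1 - t) * Leg \<alpha> x + t * Leg \<alpha> y"
      unfolding eqs
    proof (cases "x < y")
      case True thus "L ((1 - t) * x + t * y) < (1 - t) * L x + t * L y" using core[of x y t] x y h by auto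
    next
      case False
      hence "y < x" using h by auto
      hence "L ((1 - (1 - t)) * y + (1 - t) * x) < (1 - (1 - t)) * L y + (1 - t) * L x"
        using core[of y x "1 - t"] x y h by auto
      thus "L ((1 - t) * x + t * y) < (1 - t) * L x + t * L y" by (simp add: algebra_simps)
    qed
  qed
qed

end


theorem lemma7p2:
  fixes \<alpha> :: real
  assumes "\<alpha> > 0" and "\<alpha> * (\<alpha> + 1) > 2"
  shows "strict_convex_on {zp \<alpha>..<1} (Leg \<alpha>)"
proof -
  have p0: "0 \<le> \<alpha> * (\<alpha> + 1)" using assms by simp
  obtain L L1 L2 where
    H1: "\<forall>x\<in>{-1<..<3}. (L has_real_derivative L1 x) (at x) \<and> (L1 has_real_derivative L2 x) (at x)"
    and H2: "\<forall>x\<in>{-1<..<1}. (1 - x\<^sup>2) * L2 x - 2 * x * L1 x + \<alpha> * (\<alpha> + 1) * L x = 0"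
    and H3: "L 1 = 1"
    using L_exists[OF p0] by blast
  interpret LL \<alpha> "\<alpha> * (\<alpha> + 1)" L L1 L2
    by unfold_locales (use H1 H2 H3 assms in auto)
  show ?thesis by (rule convex_main) (use assms in simp)
qed

end
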